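(* Let $\delta\in[\frac{\sqrt2}{2},1)$ and $p\in(0,1)$. If $\delta\le 1-(6-4\sqrt2)p$, then $$(1+\delta)2^{\frac p2-1}\Big(\frac{g(p)}{1-\delta}\Big)^{p/2}<1,$$ where $g(p)=\frac{p}{2}(1-\frac{p}{2})^{\frac{2}{p}-1}$. *)

theory Defs
  imports Complex_Main
begin

definition g :: "real \<Rightarrow> real" where
  "g p = (p / 2) * (1 - p / 2) powr (2 / p - 1)"

end

theory Submission
  imports Defs
begin

lemma ln_upper3:
  fixes x :: real
  assumes "0 \<le> x" "x < 1"
  shows "ln (1 - x) \<le> - x - x^2/2 - x^3/3"
proof -
  let ?h = "\<lambda>t::real. ln (1 - t) + t + t^2/2 + t^3/3"
  have "?h x \<le> ?h 0"
  proof (rule DERIV_nonpos_imp_nonincreasing[OF assms(1)])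
    fix t assume t: "0 \<le> t" "t \<le> x"
    hence t1: "t < 1" using assms by simp
    have "DERIV ?h t :> (-1/(1-t) + 1 + t + t^2)"
      using t1 by (auto intro!: derivative_eq_intros simp: power2_eq_square field_simps)
    moreover have "-1/(1-t) + 1 + t + t^2 = (- (t^3)) / (1-t)"
      using t1 by (simp add: field_simps power2_eq_square power3_eq_cube)
    moreover have "(- (t^3)) / (1-t) \<le> 0" using t t1 by simp
    ultimately show "\<exists>y. DERIV ?h t :> y \<and> y \<le> 0" by auto
  qed
  thus ?thesis by simp
qed

lemma exp108: "(2.9145::real) \<le> exp 1.08"
proof -
  have A: "exp (1.08::real) = exp 0.135 ^ 8"
    by (subst exp_of_nat_mult[symmetric]) simp
  have B: "(1.1441125::real)^8 \<le> exp 0.135 ^ 8"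
  proof (rule power_mono)
    show "(1.1441125::real) \<le> exp 0.135"
      using exp_lower_Taylor_quadratic[of "0.135::real"] by (simp add: power2_eq_square)
  qed simp
  have C: "(2.9145::real) \<le> 1.1441125^8" by (simp add: numeral_eq_Suc)
  show ?thesis using A B C by linarith
qed

theorem lemma2:
  fixes \<delta> p :: real
  assumes "sqrt 2 / 2 \<le> \<delta>" and "\<delta> < 1"
    and "0 < p" and "p < 1"
    and "\<delta> \<le> 1 - (6 - 4 * sqrt 2) * p"
  shows "(1 + \<delta>) * 2 powr (p / 2 - 1) * (g p / (1 - \<delta>)) powr (p / 2) < 1"
proof -
  define q where "q = p / 2"
  define e where "e = 1 - \<delta>"
  define c where "c = 12 - 8 * sqrt 2"
  have s1: "1.4142 \<le> sqrt (2::real)" by (rule real_le_rsqrt) (simp add: power2_eq_square)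
  have s2: "sqrt (2::real) \<le> 1.41422"
  proof -
    have "sqrt (2::real) \<le> sqrt (1.41422^2)" by (subst real_sqrt_le_iff) (simp add: power2_eq_square)
    thus ?thesis by simp
  qed
  have q0: "0 < q" "q < 1/2" using assms unfolding q_def by auto
  have e0: "0 < e" using assms unfolding e_def by simp
  have ce: "c * q \<le> e" using assms unfolding c_def q_def e_def by (simp add: algebra_simps)
  have cb: "0.68624 \<le> c" "c \<le> 0.6864" using s1 s2 unfolding c_def by auto
  have qb: "q \<le> 0.427"
  proof -
    have "e \<le> 1 - sqrt 2 / 2" using assms unfolding e_def by simp
    hence "c * q \<le> 1 - sqrt 2 / 2" using ce by simp
    moreover have "0.68624 * q \<le> c * q" using cb q0 by (intro mult_right_mono) auto
    moreover have "1 - sqrt 2 / 2 \<le> 1 - 1.4142 / (2::real)" using s1 by simp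
    ultimately have "0.68624 * q \<le> 1 - 1.4142 / 2" by linarith
    thus ?thesis by simp
  qed
  have gp: "g p = q * (1 - q) powr (1/q - 1)"
    unfolding g_def q_def by simp
  have gpos: "0 < g p" using gp q0 by simp
  define E where "E = (1 + \<delta>) * 2 powr (p / 2 - 1) * (g p / (1 - \<delta>)) powr (p / 2)"
  have "0 < sqrt (2::real)" by simp
  hence d0: "0 < \<delta>" using assms(1) by linarith
  have cq1: "c * q < 1" using ce d0 unfolding e_def by linarith
  have Epos: "0 < E" unfolding E_def using gpos assms d0 by (intro mult_pos_pos) auto
  have lnE: "ln E = ln (2 - e) + (q - 1) * ln 2 + q * (ln q + (1/q - 1) * ln (1 - q) - ln e)"
    unfolding E_def using gpos assms q0 e0 d0
    by (simp add: ln_mult ln_div ln_powr gp e_def q_def[symmetric] ln_mult)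
  also have "\<dots> = ln (2 - e) - ln 2 + q * ln 2 + q * ln q + (1 - q) * ln (1 - q) - q * ln e"
    using q0 by (simp add: algebra_simps)
  also have "\<dots> \<le> ln (2 - c*q) - ln 2 + q * ln 2 + q * ln q + (1 - q) * ln (1 - q) - q * ln (c*q)"
  proof -
    have cq: "0 < c * q" using cb q0 by simp
    have "ln (2 - e) \<le> ln (2 - c*q)" using ce e0 d0 unfolding e_def by (intro ln_mono) auto
    moreover have "ln (c*q) \<le> ln e" using ce cq by simp
    hence "q * ln (c*q) \<le> q * ln e" using q0 by (simp add: mult_left_mono)
    ultimately show ?thesis by linarith
  qed
  also have "\<dots> = ln (1 - (c*q)) - ln 1 + ln (1 - c*q/2) + q * (ln 2 - ln c) + (1 - q) * ln (1 - q)
       - ln (1 - (c*q)) + ln 1"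
  proof -
    have "ln (2 - c*q) = ln 2 + ln (1 - c*q/2)"
    proof -
      have "ln 2 + ln (1 - c*q/2) = ln (2 * (1 - c*q/2))" using cq1 by (subst ln_mult) auto
      also have "2 * (1 - c*q/2) = 2 - c*q" by simp
      finally show ?thesis by simp
    qed
    moreover have "ln (c*q) = ln c + ln q" using cb q0 by (simp add: ln_mult)
    ultimately show ?thesis by (simp add: algebra_simps)
  qed
  also have "\<dots> = ln (1 - c*q/2) + q * ln (2 / c) + (1 - q) * ln (1 - q)"
    using cb by (simp add: ln_div algebra_simps)
  also have "\<dots> \<le> (- (c*q/2) - (c*q/2)^2/2 - (c*q/2)^3/3) + q * 1.08
        + (1 - q) * (- q - q^2/2 - q^3/3)"
  proof -
    have a: "ln (1 - c*q/2) \<le> - (c*q/2) - (c*q/2)^2/2 - (c*q/2)^3/3"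
      using cb q0 cq1 by (intro ln_upper3) auto
    have "ln (2/c) \<le> 1.08"
    proof -
      have "2 / c \<le> 2.9145" using cb by (simp add: divide_le_eq)
      hence "2 / c \<le> exp 1.08" using exp108 by linarith
      hence "ln (2/c) \<le> ln (exp 1.08)" using cb by (intro ln_mono) auto
      thus ?thesis by simp
    qed
    hence b: "q * ln (2/c) \<le> q * 1.08" using q0 by (simp add: mult_left_mono)
    have "ln (1 - q) \<le> - q - q^2/2 - q^3/3" using q0 by (intro ln_upper3) auto
    hence c: "(1 - q) * ln (1 - q) \<le> (1 - q) * (- q - q^2/2 - q^3/3)"
      using q0 by (simp add: mult_left_mono)
    show ?thesis using a b c by linarith
  qed
  also have "\<dots> < 0"
  proof -
    have "(- (c*q/2) - (c*q/2)^2/2 - (c*q/2)^3/3) \<le> - (0.68624*q/2) - (0.68624*q/2)^2/2"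
    proof -
      have "0.68624*q/2 \<le> c*q/2" using cb q0 by simp
      hence "(0.68624*q/2)^2 \<le> (c*q/2)^2" by (rule power_mono) (use q0 in simp)
      moreover have "0 \<le> (c*q/2)^3" using cb q0 by simp
      ultimately show ?thesis using \<open>0.68624*q/2 \<le> c*q/2\<close> by linarith
    qed
    moreover have "- (0.68624*q/2) - (0.68624*q/2)^2/2 + q * 1.08 + (1 - q) * (- q - q^2/2 - q^3/3) < 0"
    proof -
      have "- (0.68624/2) - (0.68624/2)^2/2*q + 1.08 - 1 + q/2 + q^2/6 + q^3/3 < (0::real)"
      proof -
        have "q^2 \<le> 0.427^2" using q0 qb by (intro power_mono) auto
        moreover have "q^3 \<le> 0.427^3" using q0 qb by (intro power_mono) auto
        ultimately show ?thesis using qb by (simp add: power2_eq_square power3_eq_cube)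
      qed
      hence "q * (- (0.68624/2) - (0.68624/2)^2/2*q + 1.08 - 1 + q/2 + q^2/6 + q^3/3) < 0"
        using q0 by (simp add: mult_pos_neg)
      moreover have "- (0.68624*q/2) - (0.68624*q/2)^2/2 + q * 1.08 + (1 - q) * (- q - q^2/2 - q^3/3)
          = q * (- (0.68624/2) - (0.68624/2)^2/2*q + 1.08 - 1 + q/2 + q^2/6 + q^3/3)"
        by (simp add: power2_eq_square power3_eq_cube field_simps)
      ultimately show ?thesis by linarith
    qed
    ultimately show ?thesis by linarith
  qed
  finally have "ln E < 0" .
  hence "E < 1" using Epos by simp
  thus ?thesis unfolding E_def .
qed

end
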